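(* Let $E$ be a congruence on $\overline{\boldsymbol{T}(X_1,\ldots,X_n)}$, $F$ a congruence on $\overline{\boldsymbol{T}(Y_1,\ldots,Y_m)}$, $V:=\boldsymbol{V}(E)$, $W:=\boldsymbol{V}(F)$, $\pi_E$ the natural surjection onto $\overline{\boldsymbol{T}(X_1,\ldots,X_n)}/E$, and $\psi:\overline{\boldsymbol{T}(X_1,\ldots,X_n)}/E\to\overline{\boldsymbol{T}(Y_1,\ldots,Y_m)}/F$ a $\boldsymbol{T}$-algebra homomorphism; let $\theta:W\to\boldsymbol{T}^n$, $y\mapsto(\psi(\pi_E(X_1))(y),\ldots,\psi(\pi_E(X_n))(y))$. If $\psi$ is an isomorphism, then $V$ and $W$ are homeomorphic via $\theta$.
   Context: $\boldsymbol{T}=\mathbb{R}\cup\{-\infty\}$ with $a\oplus b=\max\{a,b\}$, $a\odot b=a+b$. $\overline{\boldsymbol{T}[X_1,\ldots,X_n]}$ is the tropical polynomial semiring modulo identifying polynomials defining the same function $\boldsymbol{T}^n\to\boldsymbol{T}$; it is cancellative and $\overline{\boldsymbol{T}(X_1,\ldots,X_n)}$ is its semifield of fractions ($X_i$ denoting the image of the variable). Each element defines a function $\mathbb{R}^n\to\boldsymbol{T}$ (quotients evaluated as differences). $\boldsymbol{T}$-algebras are semirings with a semiring homomorphism from $\boldsymbol{T}$; homomorphisms are compatible semiring homomorphisms, isomorphisms the bijective ones. A congruence is an equivalence relation compatible with both operations. $\boldsymbol{V}(E)=\{x\in\mathbb{R}^n\mid f(x)=g(x)\ \forall(f,g)\in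 E\}$; an element of the quotient by $F$ is evaluated at points of $\boldsymbol{V}(F)$ via any representative (well defined). Subsets of $\mathbb{R}^n$, $\mathbb{R}^m$ carry the Euclidean topology. *)

theory Defs
  imports "HOL-Analysis.Analysis"
begin

text \<open>The tropical semifield T = R \<union> {-\<infinity>} is modelled inside ereal (values never +\<infinity>).
 max is tropical addition, + is tropical multiplication.
 Elements of the semifield of fractions of the functional tropical polynomial semiring in the
 variables indexed by the finite type 'n are represented by the functions R^n \<rightarrow> T they define.\<close>

definition trop_poly_fun :: "((real^'n) \<Rightarrow> ereal) set" where
  "trop_poly_fun = {f. \<exists>S :: (('n \<Rightarrow> nat) \<times> real) set. finite S \<and>
      f = (\<lambda>x. (SUP p\<in>S. ereal (snd p + (\<Sum>i\<in>UNIV. real (fst p i) * x $ i))))}"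

definition trop_rat :: "((real^'n) \<Rightarrow> ereal) set" where
  "trop_rat = {(\<lambda>x. f x - g x) | f g. f \<in> trop_poly_fun \<and> g \<in> trop_poly_fun \<and> g \<noteq> (\<lambda>_. -\<infinity>)}"

definition tmax :: "((real^'n) \<Rightarrow> ereal) \<Rightarrow> ((real^'n) \<Rightarrow> ereal) \<Rightarrow> ((real^'n) \<Rightarrow> ereal)" where
  "tmax f g = (\<lambda>x. max (f x) (g x))"

definition tplus :: "((real^'n) \<Rightarrow> ereal) \<Rightarrow> ((real^'n) \<Rightarrow> ereal) \<Rightarrow> ((real^'n) \<Rightarrow> ereal)" where
  "tplus f g = (\<lambda>x. f x + g x)"

definition Xvar :: "'n \<Rightarrow> ((real^'n) \<Rightarrow> ereal)" where
  "Xvar i = (\<lambda>x. ereal (x $ i))"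

definition trop_congruence :: "(((real^'n) \<Rightarrow> ereal) \<times> ((real^'n) \<Rightarrow> ereal)) set \<Rightarrow> bool" where
  "trop_congruence E \<longleftrightarrow> equiv trop_rat E \<and>
     (\<forall>(a,b)\<in>E. \<forall>(c,d)\<in>E. (tmax a c, tmax b d) \<in> E \<and> (tplus a c, tplus b d) \<in> E)"

definition cls :: "(('a \<Rightarrow> ereal) \<times> ('a \<Rightarrow> ereal)) set \<Rightarrow> ('a \<Rightarrow> ereal) \<Rightarrow> ('a \<Rightarrow> ereal) set" where
  "cls E f = E `` {f}"

definition qop :: "(('a \<Rightarrow> ereal) \<Rightarrow> ('a \<Rightarrow> ereal) \<Rightarrow> ('a \<Rightarrow> ereal))
   \<Rightarrow> (('a \<Rightarrow> ereal) \<times> ('a \<Rightarrow> ereal)) set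
   \<Rightarrow> ('a \<Rightarrow> ereal) set \<Rightarrow> ('a \<Rightarrow> ereal) set \<Rightarrow> ('a \<Rightarrow> ereal) set" where
  "qop op E A B = E `` {op a b | a b. a \<in> A \<and> b \<in> B}"

text \<open>T-algebra homomorphism between quotients trop_rat // E and trop_rat // F:
 preserves tropical addition and multiplication and is compatible with the structure maps
 from T (c \<mapsto> class of the constant c), which also gives preservation of 0 and 1.\<close>
definition trop_alg_hom ::
  "(((real^'n) \<Rightarrow> ereal) \<times> ((real^'n) \<Rightarrow> ereal)) set \<Rightarrow> (((real^'m) \<Rightarrow> ereal) \<times> ((real^'m) \<Rightarrow> ereal)) set
   \<Rightarrow> (((real^'n) \<Rightarrow> ereal) set \<Rightarrow> ((real^'m) \<Rightarrow> ereal) set) \<Rightarrow> bool" where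
  "trop_alg_hom E F \<psi> \<longleftrightarrow>
     \<psi> ` (trop_rat // E) \<subseteq> trop_rat // F \<and>
     (\<forall>A\<in>trop_rat // E. \<forall>B\<in>trop_rat // E.
        \<psi> (qop tmax E A B) = qop tmax F (\<psi> A) (\<psi> B) \<and>
        \<psi> (qop tplus E A B) = qop tplus F (\<psi> A) (\<psi> B)) \<and>
     (\<forall>c::ereal. c \<noteq> \<infinity> \<longrightarrow> \<psi> (cls E (\<lambda>_. c)) = cls F (\<lambda>_. c))"

definition trop_alg_iso where
  "trop_alg_iso E F \<psi> \<longleftrightarrow> trop_alg_hom E F \<psi> \<and> bij_betw \<psi> (trop_rat // E) (trop_rat // F)"

definition Vset :: "(('a \<Rightarrow> ereal) \<times> ('a \<Rightarrow> ereal)) set \<Rightarrow> 'a set" where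
  "Vset E = {x. \<forall>(f,g)\<in>E. f x = g x}"

definition cls_eval :: "('a \<Rightarrow> ereal) set \<Rightarrow> 'a \<Rightarrow> ereal" where
  "cls_eval C y = (SOME f. f \<in> C) y"

end

theory Submission
  imports Defs
begin


definition mono_f :: "('n \<Rightarrow> nat) \<times> real \<Rightarrow> (real^'n) \<Rightarrow> ereal" where
  "mono_f p = (\<lambda>x. ereal (snd p + (\<Sum>i\<in>UNIV. real (fst p i) * x $ i)))"

lemma poly_in: "finite S \<Longrightarrow> (\<lambda>x. SUP p\<in>S. mono_f p x) \<in> trop_poly_fun"
  unfolding trop_poly_fun_def mono_f_def by blast

lemma const0_poly: "(\<lambda>x::real^'n. 0::ereal) \<in> trop_poly_fun"
proof -
  have "(\<lambda>x::real^'n. 0::ereal) = (\<lambda>x. SUP p\<in>{((\<lambda>_. 0)::'n\<Rightarrow>nat, 0::real)}. mono_f p x)"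
    by (simp add: mono_f_def zero_ereal_def)
  then show ?thesis using poly_in[of "{((\<lambda>_. 0)::'n\<Rightarrow>nat, 0::real)}"] by simp
qed

lemma poly_cases:
  assumes "f \<in> (trop_poly_fun :: ((real^'n) \<Rightarrow> ereal) set)"
  shows "f = (\<lambda>_. -\<infinity>) \<or> (\<exists>P. continuous_on UNIV P \<and> f = (\<lambda>x. ereal (P x)))"
proof -
  obtain S where S0: "finite S" "f = (\<lambda>x. SUP p\<in>S. ereal (snd p + (\<Sum>i\<in>UNIV. real (fst p i) * x $ i)))"
    using assms unfolding trop_poly_fun_def by blast
  have S: "finite S" "f = (\<lambda>x. SUP p\<in>S. mono_f p x)" using S0 by (simp_all add: mono_f_def)
  show ?thesis
  proof (cases "S = {}")
    case True then show ?thesis using S by (simp add: bot_ereal_def)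
  next
    case False
    have "\<exists>P. continuous_on UNIV P \<and> (\<lambda>x. SUP p\<in>S. mono_f p x) = (\<lambda>x. ereal (P x))"
      using S(1) False
    proof (induction S rule: finite_ne_induct)
      case (singleton p)
      have "(\<lambda>x. SUP q\<in>{p}. mono_f q x) = (\<lambda>x. ereal (snd p + (\<Sum>i\<in>UNIV. real (fst p i) * x $ i)))"
        by (simp add: mono_f_def)
      moreover have "continuous_on UNIV (\<lambda>x. snd p + (\<Sum>i\<in>UNIV. real (fst p i) * x $ i))"
        by (intro continuous_on_add continuous_on_const continuous_on_sum
            continuous_on_mult continuous_on_component continuous_on_id)
      ultimately show ?case by blast
    next
      case (insert p S)
      then obtain P where P: "continuous_on UNIV P" "(\<lambda>x. SUP p\<in>S. mono_f p x) = (\<lambda>x. ereal (P x))"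
        by blast
      have "(\<lambda>x. SUP p\<in>insert p S. mono_f p x) =
          (\<lambda>x. ereal (max (snd p + (\<Sum>i\<in>UNIV. real (fst p i) * x $ i)) (P x)))"
      proof
        fix x
        have e: "(SUP q\<in>S. mono_f q x) = ereal (P x)" using fun_cong[OF P(2), of x] by simp
        have "(SUP q\<in>insert p S. mono_f q x) = sup (mono_f p x) (SUP q\<in>S. mono_f q x)" by simp
        also have "\<dots> = max (mono_f p x) (ereal (P x))" by (simp only: e sup_max)
        finally show "(SUP p\<in>insert p S. mono_f p x) = ereal (max (snd p + (\<Sum>i\<in>UNIV. real (fst p i) * x $ i)) (P x))"
          by (simp add: mono_f_def)
      qed
      moreover have "continuous_on UNIV (\<lambda>x. max (snd p + (\<Sum>i\<in>UNIV. real (fst p i) * x $ i)) (P x))"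
        by (intro continuous_on_max P(1) continuous_on_add continuous_on_const continuous_on_sum
            continuous_on_mult continuous_on_component continuous_on_id)
      ultimately show ?case by blast
    qed
    then show ?thesis using S by auto
  qed
qed

lemma nz0: "(\<lambda>_::real^'n. 0::ereal) \<noteq> (\<lambda>_. -\<infinity>)"
proof
  assume "(\<lambda>_::real^'n. 0::ereal) = (\<lambda>_. -\<infinity>)"
  then have "(0::ereal) = -\<infinity>" by (rule fun_cong)
  then show False by simp
qed

lemma poly_in_rat: assumes "f \<in> trop_poly_fun" shows "f \<in> trop_rat"
proof -
  have e: "f = (\<lambda>x. f x - (\<lambda>_. 0) x)" by simp
  show ?thesis unfolding trop_rat_def
    apply (rule CollectI, rule exI[of _ f], rule exI[of _ "\<lambda>_. 0"])
    apply (intro conjI)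
       apply (rule e)
      apply (rule assms)
     apply (rule const0_poly)
    apply (rule nz0)
    done
qed

lemma neg_in_rat: assumes "f \<in> trop_poly_fun" "f \<noteq> (\<lambda>_. -\<infinity>)" shows "(\<lambda>x. 0 - f x) \<in> trop_rat"
proof -
  have e: "(\<lambda>x. 0 - f x) = (\<lambda>x. (\<lambda>_. 0) x - f x)" by simp
  show ?thesis unfolding trop_rat_def
    apply (rule CollectI, rule exI[of _ "\<lambda>_. 0"], rule exI[of _ f])
    apply (intro conjI)
       apply (rule e)
      apply (rule const0_poly)
     apply (rule assms(1))
    apply (rule assms(2))
    done
qed

lemma mono_in: "mono_f p \<in> trop_poly_fun"
  using poly_in[of "{p}"] by simp

lemma const_in: assumes "c \<noteq> \<infinity>" shows "(\<lambda>_::real^'n. c) \<in> trop_rat"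
proof (cases c)
  case (real r)
  have eq: "(\<lambda>_::real^'n. c) = mono_f ((\<lambda>_. 0), r)" by (simp add: mono_f_def real)
  show ?thesis by (subst eq) (rule poly_in_rat[OF mono_in])
next
  case MInf
  have eq: "(\<lambda>_::real^'n. c) = (\<lambda>x. SUP p\<in>{}. mono_f p x)" by (simp add: MInf bot_ereal_def)
  show ?thesis by (subst eq) (rule poly_in_rat[OF poly_in], simp)
next
  case PInf
  then show ?thesis using assms by simp
qed

definition mon :: "('n \<Rightarrow> nat) \<Rightarrow> (real^'n) \<Rightarrow> ereal" where
  "mon k = (\<lambda>x. ereal (\<Sum>i\<in>UNIV. real (k i) * x $ i))"

lemma mon_in: "mon k \<in> trop_rat"
proof -
  have eq: "mon k = mono_f (k, 0)" by (simp add: mon_def mono_f_def)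
  show ?thesis by (subst eq) (rule poly_in_rat[OF mono_in])
qed

lemma Xvar_mon: "Xvar j = mon (\<lambda>i. if i = j then 1 else 0)"
  by (simp add: mon_def Xvar_def fun_eq_iff if_distrib[where f=real] if_distrib[where f="\<lambda>a. a * _"] cong: if_cong)

lemma Xvar_poly: "Xvar j \<in> trop_poly_fun"
proof -
  have eq: "Xvar j = mono_f ((\<lambda>i. if i = j then 1 else 0), 0)"
    unfolding Xvar_mon by (simp add: mon_def mono_f_def)
  show ?thesis by (subst eq) (rule mono_in)
qed



lemma cong_sub: "trop_congruence E \<Longrightarrow> E \<subseteq> trop_rat \<times> trop_rat"
  unfolding trop_congruence_def equiv_def refl_on_def by blast

lemma cong_refl: "trop_congruence E \<Longrightarrow> a \<in> trop_rat \<Longrightarrow> (a,a) \<in> E"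
  unfolding trop_congruence_def equiv_def refl_on_def by blast

lemma cong_max: "trop_congruence E \<Longrightarrow> (a,b) \<in> E \<Longrightarrow> (c,d) \<in> E \<Longrightarrow> (tmax a c, tmax b d) \<in> E"
  unfolding trop_congruence_def by blast

lemma cong_plus: "trop_congruence E \<Longrightarrow> (a,b) \<in> E \<Longrightarrow> (c,d) \<in> E \<Longrightarrow> (tplus a c, tplus b d) \<in> E"
  unfolding trop_congruence_def by blast

lemma tmax_in: "trop_congruence (E::((real^'n \<Rightarrow> ereal) \<times> (real^'n \<Rightarrow> ereal)) set) \<Longrightarrow> (a::real^'n \<Rightarrow> ereal) \<in> trop_rat \<Longrightarrow> c \<in> trop_rat \<Longrightarrow> tmax a c \<in> trop_rat"
  using cong_max[of E a a c c] cong_refl[of E] cong_sub[of E] by blast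

lemma tplus_in: "trop_congruence (E::((real^'n \<Rightarrow> ereal) \<times> (real^'n \<Rightarrow> ereal)) set) \<Longrightarrow> (a::real^'n \<Rightarrow> ereal) \<in> trop_rat \<Longrightarrow> c \<in> trop_rat \<Longrightarrow> tplus a c \<in> trop_rat"
  using cong_plus[of E a a c c] cong_refl[of E] cong_sub[of E] by blast

lemma qop_cls:
  assumes E: "trop_congruence E" and a: "a \<in> trop_rat" and b: "b \<in> trop_rat"
    and op: "\<And>a b c d. (a,b) \<in> E \<Longrightarrow> (c,d) \<in> E \<Longrightarrow> (op a c, op b d) \<in> E"
  shows "qop op E (cls E a) (cls E b) = cls E (op a b)"
proof -
  have eq: "equiv trop_rat E" using E unfolding trop_congruence_def by blast
  have "{op a' b' | a' b'. a' \<in> cls E a \<and> b' \<in> cls E b} \<subseteq> E `` {op a b}"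
    using op unfolding cls_def by blast
  moreover have "op a b \<in> {op a' b' | a' b'. a' \<in> cls E a \<and> b' \<in> cls E b}"
    using cong_refl[OF E a] cong_refl[OF E b] unfolding cls_def by blast
  ultimately have sub: "E `` {op a' b' | a' b'. a' \<in> cls E a \<and> b' \<in> cls E b} = E `` {op a b}"
  proof -
    assume s1: "{op a' b' | a' b'. a' \<in> cls E a \<and> b' \<in> cls E b} \<subseteq> E `` {op a b}"
      and s2: "op a b \<in> {op a' b' | a' b'. a' \<in> cls E a \<and> b' \<in> cls E b}"
    show ?thesis
    proof
      show "E `` {op a' b' | a' b'. a' \<in> cls E a \<and> b' \<in> cls E b} \<subseteq> E `` {op a b}"
      proof
        fix z assume "z \<in> E `` {op a' b' | a' b'. a' \<in> cls E a \<and> b' \<in> cls E b}"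
        then obtain w where w: "w \<in> {op a' b' | a' b'. a' \<in> cls E a \<and> b' \<in> cls E b}" "(w,z) \<in> E" by blast
        have "(op a b, w) \<in> E" using s1 w(1) by blast
        then show "z \<in> E `` {op a b}" using w(2) eq unfolding equiv_def trans_def by blast
      qed
    next
      show "E `` {op a b} \<subseteq> E `` {op a' b' | a' b'. a' \<in> cls E a \<and> b' \<in> cls E b}"
        using s2 by blast
    qed
  qed
  then show ?thesis unfolding qop_def cls_def by simp
qed

lemma cls_in: "a \<in> trop_rat \<Longrightarrow> cls E a \<in> trop_rat // E"
  unfolding cls_def by (rule quotientI)

lemma quot_cls: "C \<in> trop_rat // E \<Longrightarrow> \<exists>a\<in>trop_rat. C = cls E a"
  unfolding cls_def by (erule quotientE) blast

lemma eval_cls: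
  assumes F: "trop_congruence F" and y: "y \<in> Vset F" and a: "a \<in> trop_rat"
  shows "cls_eval (cls F a) y = a y"
proof -
  have "a \<in> cls F a" using cong_refl[OF F a] unfolding cls_def by blast
  then have "(SOME f. f \<in> cls F a) \<in> cls F a" by (rule someI[where P="\<lambda>f. f \<in> cls F a"])
  then have "(a, SOME f. f \<in> cls F a) \<in> F" unfolding cls_def by blast
  then show ?thesis using y unfolding cls_eval_def Vset_def by fastforce
qed

definition theta :: "(((real^'n) \<Rightarrow> ereal) \<times> ((real^'n) \<Rightarrow> ereal)) set
   \<Rightarrow> (((real^'n) \<Rightarrow> ereal) set \<Rightarrow> ((real^'m) \<Rightarrow> ereal) set) \<Rightarrow> real^'m \<Rightarrow> real^'n" where
  "theta E \<psi> y = (\<chi> i. real_of_ereal (cls_eval (\<psi> (cls E (Xvar i))) y))"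

lemma ereal_sum0: "(u::ereal) + v = 0 \<Longrightarrow> v = - u \<and> u \<in> range ereal"
  by (cases u; cases v) auto

context
  fixes E :: "(((real^'n) \<Rightarrow> ereal) \<times> ((real^'n) \<Rightarrow> ereal)) set"
    and F :: "(((real^'m) \<Rightarrow> ereal) \<times> ((real^'m) \<Rightarrow> ereal)) set"
    and \<psi> :: "((real^'n) \<Rightarrow> ereal) set \<Rightarrow> ((real^'m) \<Rightarrow> ereal) set"
    and y :: "real^'m"
  assumes E: "trop_congruence E" and F: "trop_congruence F" and h: "trop_alg_hom E F \<psi>"
    and y: "y \<in> Vset F"
begin

lemma hom_max: "A \<in> trop_rat // E \<Longrightarrow> B \<in> trop_rat // E \<Longrightarrow> \<psi> (qop tmax E A B) = qop tmax F (\<psi> A) (\<psi> B)"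
  using h unfolding trop_alg_hom_def by blast

lemma hom_plus: "A \<in> trop_rat // E \<Longrightarrow> B \<in> trop_rat // E \<Longrightarrow> \<psi> (qop tplus E A B) = qop tplus F (\<psi> A) (\<psi> B)"
  using h unfolding trop_alg_hom_def by blast

lemma hom_const: "c \<noteq> \<infinity> \<Longrightarrow> \<psi> (cls E (\<lambda>_. c)) = cls F (\<lambda>_. c)"
  using h unfolding trop_alg_hom_def by blast

lemma ev_rep: "a \<in> trop_rat \<Longrightarrow> \<exists>r\<in>trop_rat. \<psi> (cls E a) = cls F r"
  using h cls_in[of a E] quot_cls unfolding trop_alg_hom_def by blast

lemma ev_max: assumes "a \<in> trop_rat" "b \<in> trop_rat"
  shows "cls_eval (\<psi> (cls E (tmax a b))) y = max (cls_eval (\<psi> (cls E a)) y) (cls_eval (\<psi> (cls E b)) y)"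
proof -
  obtain ra rb where r: "ra \<in> trop_rat" "\<psi> (cls E a) = cls F ra" "rb \<in> trop_rat" "\<psi> (cls E b) = cls F rb"
    using ev_rep assms by metis
  have "\<psi> (cls E (tmax a b)) = \<psi> (qop tmax E (cls E a) (cls E b))"
    using qop_cls[OF E assms, of tmax] cong_max[OF E] by simp
  also have "\<dots> = qop tmax F (cls F ra) (cls F rb)"
    using hom_max[OF cls_in cls_in, OF assms] r by simp
  also have "\<dots> = cls F (tmax ra rb)"
    using qop_cls[OF F r(1,3), of tmax] cong_max[OF F] by simp
  finally show ?thesis using eval_cls[OF F y] r tmax_in[OF F r(1,3)] by (simp add: tmax_def)
qed

lemma ev_plus: assumes "a \<in> trop_rat" "b \<in> trop_rat"
  shows "cls_eval (\<psi> (cls E (tplus a b))) y = cls_eval (\<psi> (cls E a)) y + cls_eval (\<psi> (cls E b)) y"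
proof -
  obtain ra rb where r: "ra \<in> trop_rat" "\<psi> (cls E a) = cls F ra" "rb \<in> trop_rat" "\<psi> (cls E b) = cls F rb"
    using ev_rep assms by metis
  have "\<psi> (cls E (tplus a b)) = \<psi> (qop tplus E (cls E a) (cls E b))"
    using qop_cls[OF E assms, of tplus] cong_plus[OF E] by simp
  also have "\<dots> = qop tplus F (cls F ra) (cls F rb)"
    using hom_plus[OF cls_in cls_in, OF assms] r by simp
  also have "\<dots> = cls F (tplus ra rb)"
    using qop_cls[OF F r(1,3), of tplus] cong_plus[OF F] by simp
  finally show ?thesis using eval_cls[OF F y] r tplus_in[OF F r(1,3)] by (simp add: tplus_def)
qed

lemma ev_const: assumes "c \<noteq> \<infinity>" shows "cls_eval (\<psi> (cls E (\<lambda>_. c))) y = c"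
  using hom_const[OF assms] eval_cls[OF F y const_in[OF assms]] by simp

lemma ev_neg: assumes "a \<in> trop_rat" "b \<in> trop_rat" "tplus a b = (\<lambda>_. 0)"
  shows "cls_eval (\<psi> (cls E b)) y = - cls_eval (\<psi> (cls E a)) y"
    and "cls_eval (\<psi> (cls E a)) y \<in> range ereal"
proof -
  have "cls_eval (\<psi> (cls E a)) y + cls_eval (\<psi> (cls E b)) y = 0"
    using ev_plus[OF assms(1,2)] assms(3) ev_const[of 0] by (simp add: zero_ereal_def)
  then show "cls_eval (\<psi> (cls E b)) y = - cls_eval (\<psi> (cls E a)) y"
    "cls_eval (\<psi> (cls E a)) y \<in> range ereal"
    using ereal_sum0 by blast+
qed

lemma ev_X_fin: "cls_eval (\<psi> (cls E (Xvar i))) y \<in> range ereal"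
proof -
  have "Xvar i \<noteq> (\<lambda>_. -\<infinity>)" by (auto simp: Xvar_def fun_eq_iff)
  then have n: "(\<lambda>x. 0 - Xvar i x) \<in> trop_rat" by (rule neg_in_rat[OF Xvar_poly])
  have t: "tplus (Xvar i) (\<lambda>x. 0 - Xvar i x) = (\<lambda>_. 0)" by (simp add: tplus_def Xvar_def zero_ereal_def)
  show ?thesis by (rule ev_neg(2)[OF poly_in_rat[OF Xvar_poly] n t])
qed

lemma ev_X: "cls_eval (\<psi> (cls E (Xvar i))) y = ereal (theta E \<psi> y $ i)"
proof -
  obtain r where "cls_eval (\<psi> (cls E (Xvar i))) y = ereal r" using ev_X_fin[of i] by blast
  then show ?thesis unfolding theta_def by simp
qed

end



lemma sum_rem: "(\<Sum>i\<in>UNIV. g i) = g j + (\<Sum>i\<in>UNIV - {j}. g i)" for g :: "'n::finite \<Rightarrow> 'a::comm_monoid_add"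
  by (simp add: sum.remove)

context
  fixes E :: "(((real^'n) \<Rightarrow> ereal) \<times> ((real^'n) \<Rightarrow> ereal)) set"
    and F :: "(((real^'m) \<Rightarrow> ereal) \<times> ((real^'m) \<Rightarrow> ereal)) set"
    and \<psi> :: "((real^'n) \<Rightarrow> ereal) set \<Rightarrow> ((real^'m) \<Rightarrow> ereal) set"
    and y :: "real^'m"
  assumes E: "trop_congruence E" and F: "trop_congruence F" and h: "trop_alg_hom E F \<psi>"
    and y: "y \<in> Vset F"
begin

lemma ev_mon: "cls_eval (\<psi> (cls E (mon k))) y = mon k (theta E \<psi> y)"
proof (induction "sum k UNIV" arbitrary: k)
  case 0
  then have k0: "\<And>i. k i = 0" by simp
  have "mon k = (\<lambda>_. 0)" by (simp add: mon_def k0 zero_ereal_def)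
  then show ?case using ev_const[OF E F h y, of 0] by simp
next
  case (Suc n)
  have "\<exists>j. k j > 0"
  proof (rule ccontr)
    assume "\<not> (\<exists>j. k j > 0)"
    then have "\<And>i. k i = 0" by auto
    then have "sum k UNIV = 0" by simp
    with Suc.hyps(2) show False by simp
  qed
  then obtain j where j: "k j > 0" by blast
  define k' where "k' = k(j := k j - 1)"
  have sk: "sum k UNIV = k j + sum k (UNIV - {j})" by (rule sum_rem)
  have sk': "sum k' UNIV = k' j + sum k' (UNIV - {j})" by (rule sum_rem)
  have "sum k' (UNIV - {j}) = sum k (UNIV - {j})" unfolding k'_def by (intro sum.cong) auto
  then have "n = sum k' UNIV" using sk sk' Suc.hyps(2) j unfolding k'_def by simp
  note IH = Suc.hyps(1)[OF this]
  have lin: "(\<Sum>i\<in>UNIV. real (k i) * x $ i) = (\<Sum>i\<in>UNIV. real (k' i) * x $ i) + x $ j" for x :: "real^'n"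
  proof -
    have a: "(\<Sum>i\<in>UNIV. real (k i) * x $ i) = real (k j) * x $ j + (\<Sum>i\<in>UNIV - {j}. real (k i) * x $ i)"
      by (rule sum_rem)
    have b: "(\<Sum>i\<in>UNIV. real (k' i) * x $ i) = real (k' j) * x $ j + (\<Sum>i\<in>UNIV - {j}. real (k' i) * x $ i)"
      by (rule sum_rem)
    have c: "(\<Sum>i\<in>UNIV - {j}. real (k' i) * x $ i) = (\<Sum>i\<in>UNIV - {j}. real (k i) * x $ i)"
      unfolding k'_def by (intro sum.cong) auto
    have d: "real (k j) = real (k' j) + 1" unfolding k'_def using j by simp
    show ?thesis using a b c d by (simp add: algebra_simps)
  qed
  have eq: "mon k = tplus (mon k') (Xvar j)"
    by (rule ext) (simp add: mon_def tplus_def Xvar_def lin)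
  have "cls_eval (\<psi> (cls E (mon k))) y = cls_eval (\<psi> (cls E (mon k'))) y + cls_eval (\<psi> (cls E (Xvar j))) y"
    unfolding eq by (rule ev_plus[OF E F h y mon_in poly_in_rat[OF Xvar_poly]])
  also have "\<dots> = mon k' (theta E \<psi> y) + ereal (theta E \<psi> y $ j)"
    using IH ev_X[OF E F h y, of j] by simp
  also have "\<dots> = mon k (theta E \<psi> y)" by (simp add: eq tplus_def Xvar_def)
  finally show ?case .
qed

lemma ev_mono: "cls_eval (\<psi> (cls E (mono_f p))) y = mono_f p (theta E \<psi> y)"
proof -
  have eq: "mono_f p = tplus (\<lambda>_. ereal (snd p)) (mon (fst p))"
    by (rule ext) (simp add: mono_f_def mon_def tplus_def)
  have "cls_eval (\<psi> (cls E (mono_f p))) y = ereal (snd p) + mon (fst p) (theta E \<psi> y)"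
    unfolding eq using ev_plus[OF E F h y const_in mon_in, of "ereal (snd p)" "fst p"]
      ev_const[OF E F h y, of "ereal (snd p)"] ev_mon[of "fst p"] by simp
  also have "\<dots> = mono_f p (theta E \<psi> y)" by (simp add: eq tplus_def)
  finally show ?thesis .
qed

lemma ev_poly: "finite S \<Longrightarrow> cls_eval (\<psi> (cls E (\<lambda>x. SUP p\<in>S. mono_f p x))) y = (SUP p\<in>S. mono_f p (theta E \<psi> y))"
proof (induction S rule: finite_induct)
  case empty
  have eq: "(\<lambda>x::real^'n. SUP p\<in>{}. mono_f p x) = (\<lambda>_. -\<infinity>)" by (simp add: bot_ereal_def)
  show ?case unfolding eq using ev_const[OF E F h y, of "-\<infinity>"] by (simp add: bot_ereal_def)
next
  case (insert p S)
  have eq: "(\<lambda>x. SUP q\<in>insert p S. mono_f q x) = tmax (mono_f p) (\<lambda>x. SUP q\<in>S. mono_f q x)"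
    by (rule ext) (simp add: tmax_def sup_max)
  have "cls_eval (\<psi> (cls E (\<lambda>x. SUP q\<in>insert p S. mono_f q x))) y
      = max (mono_f p (theta E \<psi> y)) (SUP q\<in>S. mono_f q (theta E \<psi> y))"
    unfolding eq using ev_max[OF E F h y poly_in_rat[OF mono_in] poly_in_rat[OF poly_in[OF insert(1)]]]
      ev_mono insert(3) by simp
  then show ?case by (simp add: sup_max)
qed

lemma ev_polyf: assumes "f \<in> trop_poly_fun" shows "cls_eval (\<psi> (cls E f)) y = f (theta E \<psi> y)"
proof -
  obtain S where S0: "finite S" "f = (\<lambda>x. SUP p\<in>S. ereal (snd p + (\<Sum>i\<in>UNIV. real (fst p i) * x $ i)))"
    using assms unfolding trop_poly_fun_def by blast
  have S: "f = (\<lambda>x. SUP p\<in>S. mono_f p x)" using S0 by (simp_all add: mono_f_def)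
  show ?thesis unfolding S using ev_poly[OF S0(1)] by simp
qed

lemma ev_rat: assumes "f \<in> trop_rat" shows "cls_eval (\<psi> (cls E f)) y = f (theta E \<psi> y)"
proof -
  obtain p q where pq: "f = (\<lambda>x. p x - q x)" "p \<in> trop_poly_fun" "q \<in> trop_poly_fun" "q \<noteq> (\<lambda>_. -\<infinity>)"
    using assms unfolding trop_rat_def by blast
  obtain Q where Q: "q = (\<lambda>x. ereal (Q x))" using poly_cases[OF pq(3)] pq(4) by blast
  define nq where "nq = (\<lambda>x. 0 - q x)"
  have nq: "nq \<in> trop_rat" unfolding nq_def by (rule neg_in_rat[OF pq(3,4)])
  have t: "tplus q nq = (\<lambda>_. 0)" by (rule ext) (simp add: tplus_def nq_def Q zero_ereal_def)
  have fe: "f = tplus p nq"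
  proof (rule ext)
    fix x show "f x = tplus p nq x"
      unfolding pq(1) tplus_def nq_def Q by (cases "p x") auto
  qed
  have "cls_eval (\<psi> (cls E f)) y = cls_eval (\<psi> (cls E p)) y + cls_eval (\<psi> (cls E nq)) y"
    unfolding fe by (rule ev_plus[OF E F h y poly_in_rat[OF pq(2)] nq])
  also have "\<dots> = p (theta E \<psi> y) + - q (theta E \<psi> y)"
    using ev_neg(1)[OF E F h y poly_in_rat[OF pq(3)] nq t] ev_polyf[OF pq(2)] ev_polyf[OF pq(3)] by simp
  also have "\<dots> = f (theta E \<psi> y)" unfolding pq(1) Q by (cases "p (theta E \<psi> y)") auto
  finally show ?thesis .
qed

lemma theta_in: "theta E \<psi> y \<in> Vset E"
  unfolding Vset_def
proof (intro CollectI ballI, clarify)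
  fix f g assume fg: "(f, g) \<in> E"
  have fr: "f \<in> trop_rat" "g \<in> trop_rat" using cong_sub[OF E] fg by auto
  have "cls E f = cls E g" unfolding cls_def
    by (rule equiv_class_eq[of trop_rat, OF _ fg]) (use E in \<open>simp add: trop_congruence_def\<close>)
  then show "f (theta E \<psi> y) = g (theta E \<psi> y)" using ev_rat[OF fr(1)] ev_rat[OF fr(2)] by simp
qed

end

lemma rat_cont: assumes "f \<in> trop_rat" shows "continuous_on S (\<lambda>x. real_of_ereal (f x))"
proof -
  obtain p q where pq: "f = (\<lambda>x. p x - q x)" "p \<in> trop_poly_fun" "q \<in> trop_poly_fun" "q \<noteq> (\<lambda>_. -\<infinity>)"
    using assms unfolding trop_rat_def by blast
  obtain Q where Q: "q = (\<lambda>x. ereal (Q x))" "continuous_on UNIV Q" using poly_cases[OF pq(3)] pq(4) by blast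
  from poly_cases[OF pq(2)] show ?thesis
  proof
    assume "p = (\<lambda>_. -\<infinity>)"
    then have e0: "(\<lambda>x. real_of_ereal (f x)) = (\<lambda>_. 0)" unfolding pq(1) Q by (rule_tac ext) simp
    show ?thesis by (subst e0) (rule continuous_on_const)
  next
    assume "\<exists>P. continuous_on UNIV P \<and> p = (\<lambda>x. ereal (P x))"
    then obtain P where P: "continuous_on UNIV P" "p = (\<lambda>x. ereal (P x))" by blast
    then have eq: "(\<lambda>x. real_of_ereal (f x)) = (\<lambda>x. P x - Q x)" unfolding pq(1) Q by (rule_tac ext) simp
    show ?thesis unfolding eq
      by (intro continuous_on_diff continuous_on_subset[OF P(1)] continuous_on_subset[OF Q(2)]) auto
  qed
qed

lemma theta_cont: assumes F: "trop_congruence F" and h: "trop_alg_hom E F \<psi>"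
  shows "continuous_on S (theta E \<psi>)"
proof -
  have "continuous_on S (\<lambda>y. real_of_ereal (cls_eval (\<psi> (cls E (Xvar i))) y))" for i
  proof -
    have C: "\<psi> (cls E (Xvar i)) \<in> trop_rat // F"
      using h cls_in[OF poly_in_rat[OF Xvar_poly]] unfolding trop_alg_hom_def by blast
    then obtain a where a: "a \<in> trop_rat" "\<psi> (cls E (Xvar i)) = cls F a" using quot_cls by blast
    have "a \<in> \<psi> (cls E (Xvar i))" using a cong_refl[OF F a(1)] unfolding cls_def by blast
    then have "(SOME f. f \<in> \<psi> (cls E (Xvar i))) \<in> \<psi> (cls E (Xvar i))"
      by (rule someI[where P="\<lambda>f. f \<in> \<psi> (cls E (Xvar i))"])
    then have "(SOME f. f \<in> \<psi> (cls E (Xvar i))) \<in> trop_rat"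
      using in_quotient_imp_subset[OF _ C] F unfolding trop_congruence_def by blast
    then show ?thesis unfolding cls_eval_def by (rule rat_cont)
  qed
  then show ?thesis unfolding theta_def by (intro continuous_on_vec_lambda)
qed



lemma qop_in:
  assumes E: "trop_congruence E" and A: "A \<in> trop_rat // E" and B: "B \<in> trop_rat // E"
  shows "qop tmax E A B \<in> trop_rat // E" "qop tplus E A B \<in> trop_rat // E"
proof -
  obtain a b where ab: "a \<in> trop_rat" "A = cls E a" "b \<in> trop_rat" "B = cls E b"
    using quot_cls[OF A] quot_cls[OF B] by blast
  have "qop tmax E (cls E a) (cls E b) = cls E (tmax a b)"
    by (rule qop_cls[OF E ab(1,3)]) (rule cong_max[OF E])
  then show "qop tmax E A B \<in> trop_rat // E"
    using ab cls_in[OF tmax_in[OF E ab(1,3)]] by simp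
  have "qop tplus E (cls E a) (cls E b) = cls E (tplus a b)"
    by (rule qop_cls[OF E ab(1,3)]) (rule cong_plus[OF E])
  then show "qop tplus E A B \<in> trop_rat // E"
    using ab cls_in[OF tplus_in[OF E ab(1,3)]] by simp
qed

lemma hom_max': "trop_alg_hom E F \<psi> \<Longrightarrow> A \<in> trop_rat // E \<Longrightarrow> B \<in> trop_rat // E \<Longrightarrow> \<psi> (qop tmax E A B) = qop tmax F (\<psi> A) (\<psi> B)"
  unfolding trop_alg_hom_def by blast

lemma hom_plus': "trop_alg_hom E F \<psi> \<Longrightarrow> A \<in> trop_rat // E \<Longrightarrow> B \<in> trop_rat // E \<Longrightarrow> \<psi> (qop tplus E A B) = qop tplus F (\<psi> A) (\<psi> B)"
  unfolding trop_alg_hom_def by blast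

lemma hom_const': "trop_alg_hom E F \<psi> \<Longrightarrow> c \<noteq> \<infinity> \<Longrightarrow> \<psi> (cls E (\<lambda>_. c)) = cls F (\<lambda>_. c)"
  unfolding trop_alg_hom_def by blast

lemma inv_hom:
  assumes E: "trop_congruence E" and F: "trop_congruence F" and iso: "trop_alg_iso E F \<psi>"
  shows "trop_alg_hom F E (inv_into (trop_rat // E) \<psi>)"
proof -
  let ?QE = "trop_rat // E" and ?QF = "trop_rat // F" and ?\<phi> = "inv_into (trop_rat // E) \<psi>"
  have h: "trop_alg_hom E F \<psi>" and b: "bij_betw \<psi> ?QE ?QF" using iso unfolding trop_alg_iso_def by auto
  have b': "bij_betw ?\<phi> ?QF ?QE" by (rule bij_betw_inv_into[OF b])
  have inj: "inj_on \<psi> ?QE" and img: "\<psi> ` ?QE = ?QF" using b unfolding bij_betw_def by auto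
  have ri: "\<psi> (?\<phi> A) = A" if "A \<in> ?QF" for A using that img by (simp add: f_inv_into_f)
  have li: "?\<phi> (\<psi> A) = A" if "A \<in> ?QE" for A using that inj by (simp add: inv_into_f_f)
  have pin: "?\<phi> A \<in> ?QE" if "A \<in> ?QF" for A using b' that unfolding bij_betw_def by auto
  have op: "?\<phi> (qop tmax F A B) = qop tmax E (?\<phi> A) (?\<phi> B) \<and> ?\<phi> (qop tplus F A B) = qop tplus E (?\<phi> A) (?\<phi> B)"
    if A: "A \<in> ?QF" and B: "B \<in> ?QF" for A B
  proof -
    have "qop tmax F A B = \<psi> (qop tmax E (?\<phi> A) (?\<phi> B))"
      using hom_max'[OF h pin[OF A] pin[OF B]] ri[OF A] ri[OF B] by simp
    moreover have "qop tplus F A B = \<psi> (qop tplus E (?\<phi> A) (?\<phi> B))"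
      using hom_plus'[OF h pin[OF A] pin[OF B]] ri[OF A] ri[OF B] by simp
    ultimately show ?thesis using li qop_in[OF E pin[OF A] pin[OF B]] by simp
  qed
  have c: "?\<phi> (cls F (\<lambda>_. c)) = cls E (\<lambda>_. c)" if "c \<noteq> \<infinity>" for c
    using hom_const'[OF h that] li[OF cls_in[OF const_in[OF that]]] by simp
  show ?thesis unfolding trop_alg_hom_def using pin op c by blast
qed

lemma inv_gen:
  assumes E: "trop_congruence E" and F: "trop_congruence F" and h: "trop_alg_hom E F \<psi>"
    and h': "trop_alg_hom F E \<phi>" and ri: "\<And>A. A \<in> trop_rat // F \<Longrightarrow> \<psi> (\<phi> A) = A"
    and y: "y \<in> Vset F"
  shows "theta F \<phi> (theta E \<psi> y) = y"
proof -
  let ?x = "theta E \<psi> y"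
  have x: "?x \<in> Vset E" by (rule theta_in[OF E F h y])
  have "theta F \<phi> ?x $ j = y $ j" for j
  proof -
    have Y: "Xvar j \<in> trop_rat" by (rule poly_in_rat[OF Xvar_poly])
    have C: "\<phi> (cls F (Xvar j)) \<in> trop_rat // E"
      using h' cls_in[OF Y] unfolding trop_alg_hom_def by blast
    obtain a where a: "a \<in> trop_rat" "\<phi> (cls F (Xvar j)) = cls E a" using quot_cls[OF C] by blast
    have "cls_eval (\<phi> (cls F (Xvar j))) ?x = a ?x" unfolding a(2) by (rule eval_cls[OF E x a(1)])
    also have "\<dots> = cls_eval (\<psi> (cls E a)) y" by (rule ev_rat[OF E F h y a(1), symmetric])
    also have "\<psi> (cls E a) = cls F (Xvar j)" using ri[OF cls_in[OF Y]] a(2) by simp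
    also have "cls_eval (cls F (Xvar j)) y = ereal (y $ j)" using eval_cls[OF F y Y] by (simp add: Xvar_def)
    finally show ?thesis unfolding theta_def by simp
  qed
  then show ?thesis by (simp add: vec_eq_iff)
qed

theorem corollary3p20:
  fixes E :: "(((real^'n) \<Rightarrow> ereal) \<times> ((real^'n) \<Rightarrow> ereal)) set"
    and F :: "(((real^'m) \<Rightarrow> ereal) \<times> ((real^'m) \<Rightarrow> ereal)) set"
    and \<psi> :: "((real^'n) \<Rightarrow> ereal) set \<Rightarrow> ((real^'m) \<Rightarrow> ereal) set"
  assumes "trop_congruence E" and "trop_congruence F"
    and "trop_alg_iso E F \<psi>"
  shows "(\<forall>y\<in>Vset F. \<forall>i. cls_eval (\<psi> (cls E (Xvar i))) y \<in> range ereal) \<and>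
         (\<exists>g. homeomorphism (Vset F) (Vset E)
                (\<lambda>y. \<chi> i. real_of_ereal (cls_eval (\<psi> (cls E (Xvar i))) y)) g)"
proof -
  note E = assms(1) and F = assms(2)
  let ?QE = "trop_rat // E" and ?QF = "trop_rat // F" and ?\<phi> = "inv_into (trop_rat // E) \<psi>"
  have h: "trop_alg_hom E F \<psi>" and b: "bij_betw \<psi> ?QE ?QF" using assms(3) unfolding trop_alg_iso_def by auto
  have h': "trop_alg_hom F E ?\<phi>" by (rule inv_hom[OF E F assms(3)])
  have inj: "inj_on \<psi> ?QE" and img: "\<psi> ` ?QE = ?QF" using b unfolding bij_betw_def by auto
  have ri: "\<psi> (?\<phi> A) = A" if "A \<in> ?QF" for A using that img by (simp add: f_inv_into_f)
  have li: "?\<phi> (\<psi> A) = A" if "A \<in> ?QE" for A using that inj by (simp add: inv_into_f_f)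
  have th: "(\<lambda>y. \<chi> i. real_of_ereal (cls_eval (\<psi> (cls E (Xvar i))) y)) = theta E \<psi>"
    by (rule ext) (simp add: theta_def)
  have "homeomorphism (Vset F) (Vset E) (theta E \<psi>) (theta F ?\<phi>)"
  proof (rule homeomorphismI)
    show "continuous_on (Vset F) (theta E \<psi>)" by (rule theta_cont[OF F h])
    show "continuous_on (Vset E) (theta F ?\<phi>)" by (rule theta_cont[OF E h'])
    show "theta E \<psi> ` Vset F \<subseteq> Vset E" using theta_in[OF E F h] by blast
    show "theta F ?\<phi> ` Vset E \<subseteq> Vset F" using theta_in[OF F E h'] by blast
    show "theta F ?\<phi> (theta E \<psi> x) = x" if "x \<in> Vset F" for x
      by (rule inv_gen[OF E F h h' ri that])
    show "theta E \<psi> (theta F ?\<phi> x) = x" if "x \<in> Vset E" for x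
      by (rule inv_gen[OF F E h' h li that])
  qed
  then have "\<exists>g. homeomorphism (Vset F) (Vset E) (\<lambda>y. \<chi> i. real_of_ereal (cls_eval (\<psi> (cls E (Xvar i))) y)) g"
    unfolding th by blast
  moreover have "\<forall>y\<in>Vset F. \<forall>i. cls_eval (\<psi> (cls E (Xvar i))) y \<in> range ereal"
    using ev_X_fin[OF E F h] by blast
  ultimately show ?thesis by blast
qed

end
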